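(* Let $A\in\mathbb{F}_2^{m_A\times n_A}$, $B\in\mathbb{F}_2^{m_B\times n_B}$ and consider the hypergraph product code $H_X=[A\otimes I_{m_B}\mid I_{m_A}\otimes B]$, $H_Z=[I_{n_A}\otimes B^{T}\mid A^{T}\otimes I_{n_B}]$. The left--right circuit with left/right partition given by this block structure (so $L_X=A\otimes I_{m_B}$, $R_X=I_{m_A}\otimes B$, $L_Z=I_{n_A}\otimes B^T$, $R_Z=A^T\otimes I_{n_B}$) and minimal edge colourings of $L_X,R_X,L_Z,R_Z$ has depth $t=\delta(A)+\delta(B)+2$. Moreover $\delta(H_{XZ})=\delta(A)+\delta(B)$, so every single-ancilla CNOT-based SEC for this code has depth at least $\delta(A)+\delta(B)$.
   Context: For a binary matrix $M$, $r(M)$ and $c(M)$ are its maximum row and column weights and $\delta(M)=\max(r(M),c(M))$ (the maximum degree of its bipartite Tanner graph, with a variable node per column, a check node per row, and an edge per entry 1). $H_{XZ}$ denotes $H_X$ stacked vertically above $H_Z$. Single-ancilla CNOT-based SEC: each check (row of $H_X$ or $H_Z$) has a dedicated ancilla; an $X$ check's ancilla is prepared in $|+\rangle$, CNOTs go from ancilla to each data qubit in its support, then measured in $X$; a $Z$ check's ancilla is prepared in $|0\rangle$, CNOTs go from each data qubit in its support to the ancilla, then measured in $Z$. Each operation takes one time step and a qubit participates in at most one operation per step. The depth of an SEC is $t=\lim_{m\to\infty}T^{(m)}/m$, where $T^{(m)}$ is the number of time steps for $m$ consecutive rounds (rounds may overlap in time). Left--right circuit (LRC): partition the data qubits into a left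 and right set, writing $H_X=[L_X\mid R_X]$, $H_Z=[L_Z\mid R_Z]$. Choose a proper edge colouring $C(H)$ with colours $\{1,\dots,|C(H)|\}$ of the Tanner graph of each $H\in\{L_X,R_X,L_Z,R_Z\}$ (minimal means $|C(H)|=\delta(H)$). CNOTs of $L_X$ and $R_Z$ are applied in parallel, the CNOT on an edge of colour $c$ at time step $c+1$, taking $t_1=\max(|C(L_X)|,|C(R_Z)|)$ steps; then CNOTs of $L_Z$ and $R_X$ are applied with colour $c$ at time step $t_1+1+c$, taking $t_2=\max(|C(L_Z)|,|C(R_X)|)$ steps. $X$ ancillas are prepared at step 1 and measured at step $t_1+t_2+2$; $Z$ ancillas are measured at step $t_1+2$ and prepared at step $t_1+3$ (for the next round), with rounds repeated periodically, so the LRC has depth $t_1+t_2+2$. *)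

theory Defs
  imports Complex_Main
begin

text \<open>A binary matrix over F2 is given by its numbers of rows and columns and an
entry function (True = 1, False = 0); entries outside the index range are ignored.\<close>

record bmat =
  nr  :: nat
  nc  :: nat
  ent :: "nat \<Rightarrow> nat \<Rightarrow> bool"

definition ident :: "nat \<Rightarrow> bmat" where
  "ident k = \<lparr>nr = k, nc = k, ent = (\<lambda>i j. i = j)\<rparr>"

definition transp :: "bmat \<Rightarrow> bmat" where
  "transp M = \<lparr>nr = nc M, nc = nr M, ent = (\<lambda>i j. ent M j i)\<rparr>"

text \<open>Kronecker product, row index (i1, i2) is i1 * nr N + i2, column likewise.\<close>
definition kron :: "bmat \<Rightarrow> bmat \<Rightarrow> bmat" where
  "kron M N = \<lparr>nr = nr M * nr N, nc = nc M * nc N,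
     ent = (\<lambda>i j. ent M (i div nr N) (j div nc N) \<and> ent N (i mod nr N) (j mod nc N))\<rparr>"

definition hcat :: "bmat \<Rightarrow> bmat \<Rightarrow> bmat" where
  "hcat M N = \<lparr>nr = nr M, nc = nc M + nc N,
     ent = (\<lambda>i j. if j < nc M then ent M i j else ent N i (j - nc M))\<rparr>"

definition vcat :: "bmat \<Rightarrow> bmat \<Rightarrow> bmat" where
  "vcat M N = \<lparr>nr = nr M + nr N, nc = nc M,
     ent = (\<lambda>i j. if i < nr M then ent M i j else ent N (i - nr M) j)\<rparr>"

definition row_wt :: "bmat \<Rightarrow> nat \<Rightarrow> nat" where
  "row_wt M i = card {j. j < nc M \<and> ent M i j}"

definition col_wt :: "bmat \<Rightarrow> nat \<Rightarrow> nat" where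
  "col_wt M j = card {i. i < nr M \<and> ent M i j}"

definition rmax :: "bmat \<Rightarrow> nat" where
  "rmax M = Max (insert 0 (row_wt M ` {..<nr M}))"

definition cmax :: "bmat \<Rightarrow> nat" where
  "cmax M = Max (insert 0 (col_wt M ` {..<nc M}))"

definition delta :: "bmat \<Rightarrow> nat" where
  "delta M = max (rmax M) (cmax M)"

text \<open>Edges of the Tanner graph of M: pairs (check i, variable j) with M i j = 1.
A proper edge colouring with colours {1..k}: adjacent edges (sharing a check node or
a variable node) receive different colours.\<close>
definition proper_colouring :: "bmat \<Rightarrow> nat \<Rightarrow> (nat \<Rightarrow> nat \<Rightarrow> nat) \<Rightarrow> bool" where
  "proper_colouring M k col \<longleftrightarrow>
     (\<forall>i<nr M. \<forall>j<nc M. ent M i j \<longrightarrow> col i j \<in> {1..k}) \<and>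
     (\<forall>i<nr M. \<forall>j<nc M. \<forall>j'<nc M. ent M i j \<and> ent M i j' \<and> j \<noteq> j' \<longrightarrow> col i j \<noteq> col i j') \<and>
     (\<forall>i<nr M. \<forall>i'<nr M. \<forall>j<nc M. ent M i j \<and> ent M i' j \<and> i \<noteq> i' \<longrightarrow> col i j \<noteq> col i' j)"

definition minimal_colouring :: "bmat \<Rightarrow> nat \<Rightarrow> (nat \<Rightarrow> nat \<Rightarrow> nat) \<Rightarrow> bool" where
  "minimal_colouring M k col \<longleftrightarrow> proper_colouring M k col \<and> k = delta M"

text \<open>Depth of the LRC built from colourings of L_X, R_X, L_Z, R_Z using
kLX, kRX, kLZ, kRZ colours: t1 + t2 + 2 with t1 = max |C(L_X)| |C(R_Z)|,
t2 = max |C(L_Z)| |C(R_X)|.\<close>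
definition lrc_depth :: "nat \<Rightarrow> nat \<Rightarrow> nat \<Rightarrow> nat \<Rightarrow> nat" where
  "lrc_depth kLX kRX kLZ kRZ = max kLX kRZ + max kLZ kRX + 2"

text \<open>Qubits: data qubits (one per column of H_XZ) and one dedicated ancilla per check
(row of H_XZ). Operations of round r: preparation and measurement of the ancilla of
check i, and a CNOT between the ancilla of check i and each data qubit j in its support.\<close>

datatype qubit = Dat nat | Anc nat

datatype op = Prep nat nat | Meas nat nat | CX nat nat nat

fun op_qubits :: "op \<Rightarrow> qubit set" where
  "op_qubits (Prep r i) = {Anc i}"
| "op_qubits (Meas r i) = {Anc i}"
| "op_qubits (CX r i j) = {Anc i, Dat j}"

definition sec_ops :: "bmat \<Rightarrow> nat \<Rightarrow> op set" where
  "sec_ops H m =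
     {Prep r i | r i. r < m \<and> i < nr H} \<union> {Meas r i | r i. r < m \<and> i < nr H} \<union>
     {CX r i j | r i j. r < m \<and> i < nr H \<and> j < nc H \<and> ent H i j}"

text \<open>Rounds may overlap in time.\<close>
definition sec_schedule :: "bmat \<Rightarrow> nat \<Rightarrow> (op \<Rightarrow> nat) \<Rightarrow> bool" where
  "sec_schedule H m \<tau> \<longleftrightarrow>
     (\<forall>p\<in>sec_ops H m. 1 \<le> \<tau> p) \<and>
     (\<forall>p\<in>sec_ops H m. \<forall>p'\<in>sec_ops H m.
        p \<noteq> p' \<and> op_qubits p \<inter> op_qubits p' \<noteq> {} \<longrightarrow> \<tau> p \<noteq> \<tau> p') \<and>
     (\<forall>r<m. \<forall>i<nr H. \<forall>j<nc H. ent H i j \<longrightarrow>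
        \<tau> (Prep r i) < \<tau> (CX r i j) \<and> \<tau> (CX r i j) < \<tau> (Meas r i)) \<and>
     (\<forall>r<m. \<forall>i<nr H. \<tau> (Prep r i) < \<tau> (Meas r i)) \<and>
     (\<forall>r. Suc r < m \<longrightarrow> (\<forall>i<nr H. \<tau> (Meas r i) < \<tau> (Prep (Suc r) i)))"

definition sec_steps :: "bmat \<Rightarrow> nat \<Rightarrow> (op \<Rightarrow> nat) \<Rightarrow> nat" where
  "sec_steps H m \<tau> = Max (insert 0 (\<tau> ` sec_ops H m))"

definition sec_has_depth :: "bmat \<Rightarrow> (nat \<Rightarrow> op \<Rightarrow> nat) \<Rightarrow> real \<Rightarrow> bool" where
  "sec_has_depth H sched t \<longleftrightarrow>
     (\<forall>m. sec_schedule H m (sched m)) \<and>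
     (\<lambda>m. real (sec_steps H m (sched m)) / real m) \<longlonglongrightarrow> t"

end

theory Submission
  imports Defs
begin

definition propc :: "(nat \<times> nat) set \<Rightarrow> nat \<Rightarrow> (nat \<Rightarrow> nat \<Rightarrow> nat) \<Rightarrow> bool" where
 "propc E k col \<longleftrightarrow> (\<forall>r c. (r,c)\<in>E \<longrightarrow> col r c \<in> {1..k}) \<and>
   (\<forall>r c c'. (r,c)\<in>E \<longrightarrow> (r,c')\<in>E \<longrightarrow> c\<noteq>c' \<longrightarrow> col r c \<noteq> col r c') \<and>
   (\<forall>r r' c. (r,c)\<in>E \<longrightarrow> (r',c)\<in>E \<longrightarrow> r\<noteq>r' \<longrightarrow> col r c \<noteq> col r' c)"

inductive kR and kC for E :: "(nat \<times> nat) set" and col :: "nat \<Rightarrow> nat \<Rightarrow> nat" and a b j :: nat where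
  kC0: "kC E col a b j j"
| kR1: "kC E col a b j c \<Longrightarrow> (r,c)\<in>E \<Longrightarrow> col r c = a \<Longrightarrow> kR E col a b j r"
| kC1: "kR E col a b j r \<Longrightarrow> (r,c)\<in>E \<Longrightarrow> col r c = b \<Longrightarrow> kC E col a b j c"

lemma kR_D: "kR E col a b j r \<Longrightarrow> \<exists>c. (r,c)\<in>E \<and> col r c = a \<and> kC E col a b j c"
  by (erule kR.cases) auto

lemma kC_D: "kC E col a b j c \<Longrightarrow> c = j \<or> (\<exists>r. (r,c)\<in>E \<and> col r c = b \<and> kR E col a b j r)"
  by (erule kC.cases) auto

lemma k_equiv:
  assumes P: "propc E k col" and bj: "\<forall>r. (r,j)\<in>E \<longrightarrow> col r j \<noteq> b"
    and e: "(r,c)\<in>E" and cc: "col r c = a \<or> col r c = b"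
  shows "kR E col a b j r \<longleftrightarrow> kC E col a b j c"
proof
  assume "kR E col a b j r"
  then obtain c0 where c0: "(r,c0)\<in>E" "col r c0 = a" "kC E col a b j c0" using kR_D by blast
  show "kC E col a b j c"
  proof (cases "col r c = a")
    case True
    then have "c = c0" using P c0 e unfolding propc_def by metis
    then show ?thesis using c0 by simp
  next
    case False
    then show ?thesis using cc e \<open>kR E col a b j r\<close> kC1 by metis
  qed
next
  assume h: "kC E col a b j c"
  show "kR E col a b j r"
  proof (cases "col r c = a")
    case True
    then show ?thesis using h e kR1 by metis
  next
    case False
    then have cb: "col r c = b" using cc by simp
    from kC_D[OF h] show ?thesis
    proof
      assume "c = j" then show ?thesis using bj e cb by auto
    next
      assume "\<exists>r'. (r',c)\<in>E \<and> col r' c = b \<and> kR E col a b j r'"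
      then obtain r' where r': "(r',c)\<in>E" "col r' c = b" "kR E col a b j r'" by blast
      then have "r = r'" using P e cb unfolding propc_def by metis
      then show ?thesis using r' by simp
    qed
  qed
qed

lemma missing_colour:
  assumes "finite S" "card S < k"
  shows "\<exists>a\<in>{1..k}. \<forall>c\<in>S. f c \<noteq> a"
proof (rule ccontr)
  assume "\<not> ?thesis"
  then have "{1..k} \<subseteq> f ` S" by force
  then have "card {1..k} \<le> card (f ` S)" using assms(1) by (metis card_mono finite_imageI)
  also have "\<dots> \<le> card S" using assms(1) by (rule card_image_le)
  finally show False using assms(2) by simp
qed

lemma konig_step:
  assumes P: "propc E k col" and ij: "(i,j) \<notin> E"
    and a: "a \<in> {1..k}" and ai: "\<forall>c. (i,c)\<in>E \<longrightarrow> col i c \<noteq> a"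
    and b: "b \<in> {1..k}" and bj: "\<forall>r. (r,j)\<in>E \<longrightarrow> col r j \<noteq> b"
  shows "\<exists>col''. propc (insert (i,j) E) k col''"
proof -
  define g where "g x = (if x = a then b else if x = b then a else x)" for x
  have ginj: "g x = g y \<Longrightarrow> x = y" for x y unfolding g_def by (auto split: if_splits)
  have gk: "x \<in> {1..k} \<Longrightarrow> g x \<in> {1..k}" for x using a b unfolding g_def by auto
  have ga: "g x = a \<longleftrightarrow> x = b" for x unfolding g_def by auto
  have gab: "x = a \<or> x = b \<longleftrightarrow> g x = a \<or> g x = b" for x unfolding g_def by auto
  have gid: "\<not>(x = a \<or> x = b) \<Longrightarrow> g x = x" for x unfolding g_def by auto
  define col' where "col' r c = (if kC E col a b j c then g (col r c) else col r c)" for r c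
  have eqv: "(r,c)\<in>E \<Longrightarrow> col r c = a \<or> col r c = b \<Longrightarrow> kR E col a b j r \<longleftrightarrow> kC E col a b j c" for r c
    using k_equiv[OF P bj] by blast
  have F1: "(r,c)\<in>E \<Longrightarrow> col' r c \<in> {1..k}" for r c
    using P gk unfolding propc_def col'_def by auto
  have F2: "col' r c \<noteq> col' r c'" if e: "(r,c)\<in>E" "(r,c')\<in>E" "c \<noteq> c'" for r c c'
  proof -
    have o: "col r c \<noteq> col r c'" using P e unfolding propc_def by blast
    have "col' r c \<noteq> col' r c'" if e: "(r,c)\<in>E" "(r,c')\<in>E" "col r c \<noteq> col r c'"
       "kC E col a b j c" "\<not> kC E col a b j c'" for c c'
    proof (cases "col r c = a \<or> col r c = b")
      case True
      then have "kR E col a b j r" using eqv e by blast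
      then have "\<not>(col r c' = a \<or> col r c' = b)" using eqv e by blast
      moreover have "g (col r c) = a \<or> g (col r c) = b" using True gab by blast
      ultimately show ?thesis using e(4,5) unfolding col'_def by auto
    next
      case False
      then show ?thesis using e gid unfolding col'_def by auto
    qed
    note X = this
    show ?thesis
    proof (cases "kC E col a b j c"; cases "kC E col a b j c'")
      assume "kC E col a b j c" "kC E col a b j c'"
      then show ?thesis using o ginj unfolding col'_def by auto
    next
      assume "kC E col a b j c" "\<not> kC E col a b j c'"
      then show ?thesis using X[of c c'] o e by auto
    next
      assume "\<not> kC E col a b j c" "kC E col a b j c'"
      then show ?thesis using X[of c' c] o e by auto
    next
      assume "\<not> kC E col a b j c" "\<not> kC E col a b j c'"
      then show ?thesis using o unfolding col'_def by auto
    qed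
  qed
  have F3: "col' r c \<noteq> col' r' c" if e: "(r,c)\<in>E" "(r',c)\<in>E" "r \<noteq> r'" for r r' c
  proof -
    have o: "col r c \<noteq> col r' c" using P e unfolding propc_def by blast
    then show ?thesis using ginj unfolding col'_def by auto
  qed
  have F4: "(r,j)\<in>E \<Longrightarrow> col' r j \<noteq> a" for r
    using bj ga kC0 unfolding col'_def by auto
  have F5: "col' i c \<noteq> a" if e: "(i,c)\<in>E" for c
  proof (cases "kC E col a b j c")
    case True
    show ?thesis
    proof
      assume "col' i c = a"
      then have "col i c = b" using True ga unfolding col'_def by auto
      then have "kR E col a b j i" using eqv e True by blast
      then show False using kR_D ai by blast
    qed
  next
    case False then show ?thesis using ai e unfolding col'_def by auto
  qed
  define col'' where "col'' r c = (if r = i \<and> c = j then a else col' r c)" for r c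
  have c1: "col'' i j = a" by (simp add: col''_def)
  have c2: "\<not> (r = i \<and> c = j) \<Longrightarrow> col'' r c = col' r c" for r c unfolding col''_def by (rule if_not_P)
  have "propc (insert (i,j) E) k col''"
    unfolding propc_def
  proof (intro conjI allI impI)
    fix r c assume h: "(r,c) \<in> insert (i,j) E"
    show "col'' r c \<in> {1..k}"
    proof (cases "r = i \<and> c = j")
      case True then show ?thesis using a by (simp add: c1 c2)
    next
      case False then have "(r,c) \<in> E" using h by auto
      then show ?thesis using False F1 by (simp add: c1 c2)
    qed
  next
    fix r c c' assume h: "(r,c) \<in> insert (i,j) E" "(r,c') \<in> insert (i,j) E" "c \<noteq> c'"
    show "col'' r c \<noteq> col'' r c'"
    proof (cases "r = i \<and> c = j")
      case True
      then have "(i,c') \<in> E" "\<not> (r = i \<and> c' = j)" using h by auto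
      then show ?thesis using True F5 by (metis c1 c2)
    next
      case False
      then have e1: "(r,c) \<in> E" using h by auto
      show ?thesis
      proof (cases "r = i \<and> c' = j")
        case True
        then show ?thesis using False e1 F5 by (metis c1 c2)
      next
        case False2: False
        then have "(r,c') \<in> E" using h by auto
        then show ?thesis using False False2 e1 F2 h(3) by (simp add: c1 c2)
      qed
    qed
  next
    fix r r' c assume h: "(r,c) \<in> insert (i,j) E" "(r',c) \<in> insert (i,j) E" "r \<noteq> r'"
    show "col'' r c \<noteq> col'' r' c"
    proof (cases "r = i \<and> c = j")
      case True
      then have "(r',j) \<in> E" "\<not> (r' = i \<and> c = j)" using h by auto
      then show ?thesis using True F4 by (metis c1 c2)
    next
      case False
      then have e1: "(r,c) \<in> E" using h by auto
      show ?thesis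
      proof (cases "r' = i \<and> c = j")
        case True
        then show ?thesis using False e1 F4 by (metis c1 c2)
      next
        case False2: False
        then have "(r',c) \<in> E" using h by auto
        then show ?thesis using False False2 e1 F3 h(3) by (simp add: c1 c2)
      qed
    qed
  qed
  then show ?thesis by blast
qed

lemma konig:
  "finite E \<Longrightarrow> (\<forall>r. card {c. (r,c)\<in>E} \<le> k) \<Longrightarrow> (\<forall>c. card {r. (r,c)\<in>E} \<le> k) \<Longrightarrow> \<exists>col. propc E k col"
proof (induction E rule: finite_induct)
  case empty
  then show ?case unfolding propc_def by auto
next
  case (insert e E)
  obtain i j where e: "e = (i,j)" by (cases e)
  have finr: "finite {c. (r,c)\<in>F}" if "finite F" for r and F :: "(nat\<times>nat) set"
    by (rule finite_subset[of _ "snd ` F"]) (force, simp add: that)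
  have finc: "finite {r. (r,c)\<in>F}" if "finite F" for c and F :: "(nat\<times>nat) set"
    by (rule finite_subset[of _ "fst ` F"]) (force, simp add: that)
  have fi: "finite (insert e E)" using insert.hyps(1) by simp
  have "card {c. (r,c)\<in>E} \<le> card {c. (r,c)\<in>insert e E}" for r
    by (rule card_mono[OF finr[OF fi]]) blast
  then have h1: "\<forall>r. card {c. (r,c)\<in>E} \<le> k" using insert.prems(1) le_trans by blast
  have "card {r. (r,c)\<in>E} \<le> card {r. (r,c)\<in>insert e E}" for c
    by (rule card_mono[OF finc[OF fi]]) blast
  then have h2: "\<forall>c. card {r. (r,c)\<in>E} \<le> k" using insert.prems(2) le_trans by blast
  obtain col where P: "propc E k col" using insert.IH h1 h2 by blast
  have "{c. (i,c)\<in>insert e E} = insert j {c. (i,c)\<in>E}" using e by auto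
  moreover have "j \<notin> {c. (i,c)\<in>E}" using insert.hyps(2) e by auto
  ultimately have "card {c. (i,c)\<in>insert e E} = Suc (card {c. (i,c)\<in>E})"
    using finr[OF insert.hyps(1)] by simp
  then have ci: "card {c. (i,c)\<in>E} < k" using insert.prems(1) by (metis Suc_le_lessD)
  have "{r. (r,j)\<in>insert e E} = insert i {r. (r,j)\<in>E}" using e by auto
  moreover have "i \<notin> {r. (r,j)\<in>E}" using insert.hyps(2) e by auto
  ultimately have "card {r. (r,j)\<in>insert e E} = Suc (card {r. (r,j)\<in>E})"
    using finc[OF insert.hyps(1)] by simp
  then have cj: "card {r. (r,j)\<in>E} < k" using insert.prems(2) by (metis Suc_le_lessD)
  obtain a where a: "a \<in> {1..k}" "\<forall>c\<in>{c. (i,c)\<in>E}. col i c \<noteq> a"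
    using missing_colour[OF finr[OF insert.hyps(1)] ci] by blast
  obtain b where b: "b \<in> {1..k}" "\<forall>r\<in>{r. (r,j)\<in>E}. col r j \<noteq> b"
    using missing_colour[OF finc[OF insert.hyps(1)] cj, of "\<lambda>r. col r j"] by blast
  show ?case using konig_step[OF P _ a(1) _ b(1)] a(2) b(2) insert.hyps(2) e by auto
qed


lemma card_divmod:
  "card {x. x < p*q \<and> P (x div q) \<and> Q (x mod q)} = card {a. a<p \<and> P a} * card {b. b<q \<and> Q b}"
  for p q :: nat
proof (cases "q = 0")
  case True then show ?thesis by simp
next
  case False
  let ?A = "{a. a<p \<and> P a}" and ?B = "{b. b<q \<and> Q b}"
  have eq: "{x. x < p*q \<and> P (x div q) \<and> Q (x mod q)} = (\<lambda>(a,b). a*q+b) ` (?A \<times> ?B)"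
  proof (intro set_eqI iffI)
    fix x assume "x \<in> {x. x < p*q \<and> P (x div q) \<and> Q (x mod q)}"
    then have x: "x < p*q" "P (x div q)" "Q (x mod q)" by auto
    have "x div q < p" using x(1) False by (simp add: less_mult_imp_div_less)
    moreover have "x mod q < q" using False by simp
    moreover have "x = (x div q)*q + x mod q" by simp
    ultimately show "x \<in> (\<lambda>(a,b). a*q+b) ` (?A \<times> ?B)" using x
      by (intro image_eqI[of x _ "(x div q, x mod q)"]) auto
  next
    fix x assume "x \<in> (\<lambda>(a,b). a*q+b) ` (?A \<times> ?B)"
    then obtain a b where ab: "a < p" "P a" "b < q" "Q b" "x = a*q+b" by auto
    have "a*q + b < p*q"
    proof -
      have "a*q + b < a*q + q" using ab by simp
      also have "\<dots> = (a+1)*q" by simp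
      also have "\<dots> \<le> p*q" using ab(1) by (intro mult_right_mono) auto
      finally show ?thesis .
    qed
    then show "x \<in> {x. x < p*q \<and> P (x div q) \<and> Q (x mod q)}" using ab by auto
  qed
  have inj: "inj_on (\<lambda>(a,b). a*q+b) (?A \<times> ?B)"
  proof (rule inj_onI, clarify)
    fix a b a' b' assume h: "a*q+b = a'*q+b'" "b < q" "b' < q"
    have "(a*q+b) div q = a" "(a*q+b) mod q = b" using h(2) by auto
    moreover have "(a'*q+b') div q = a'" "(a'*q+b') mod q = b'" using h(3) by auto
    ultimately show "a = a' \<and> b = b'" using h(1) by metis
  qed
  show ?thesis unfolding eq card_image[OF inj] card_cartesian_product ..
qed

lemma row_wt_kron: "row_wt (kron M N) i = row_wt M (i div nr N) * row_wt N (i mod nr N)"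
  unfolding row_wt_def kron_def by (simp add: card_divmod[where P="\<lambda>a. ent M (i div nr N) a" and Q = "\<lambda>b. ent N (i mod nr N) b"])

lemma col_wt_kron: "col_wt (kron M N) j = col_wt M (j div nc N) * col_wt N (j mod nc N)"
  unfolding col_wt_def kron_def by (simp add: card_divmod[where P="\<lambda>a. ent M a (j div nc N)" and Q = "\<lambda>b. ent N b (j mod nc N)"])

lemma row_wt_ident: "i < n \<Longrightarrow> row_wt (ident n) i = 1"
proof -
  assume "i < n" then have "{j. j < n \<and> i = j} = {i}" by auto
  then show ?thesis unfolding row_wt_def ident_def by simp
qed

lemma col_wt_ident: "i < n \<Longrightarrow> col_wt (ident n) i = 1"
proof -
  assume "i < n" then have "{j. j < n \<and> j = i} = {i}" by auto
  then show ?thesis unfolding col_wt_def ident_def by simp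
qed

lemma row_wt_transp: "row_wt (transp M) i = col_wt M i"
  unfolding row_wt_def col_wt_def transp_def by simp

lemma col_wt_transp: "col_wt (transp M) i = row_wt M i"
  unfolding row_wt_def col_wt_def transp_def by simp

lemma nr_kron[simp]: "nr (kron M N) = nr M * nr N" and nc_kron[simp]: "nc (kron M N) = nc M * nc N"
  and nr_ident[simp]: "nr (ident n) = n" and nc_ident[simp]: "nc (ident n) = n"
  and nr_transp[simp]: "nr (transp M) = nc M" and nc_transp[simp]: "nc (transp M) = nr M"
  and nr_hcat[simp]: "nr (hcat M N) = nr M" and nc_hcat[simp]: "nc (hcat M N) = nc M + nc N"
  and nr_vcat[simp]: "nr (vcat M N) = nr M + nr N" and nc_vcat[simp]: "nc (vcat M N) = nc M"
  by (simp_all add: kron_def ident_def transp_def hcat_def vcat_def)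

lemma rmax_le_iff: "rmax M \<le> k \<longleftrightarrow> (\<forall>i<nr M. row_wt M i \<le> k)"
  unfolding rmax_def by auto

lemma cmax_le_iff: "cmax M \<le> k \<longleftrightarrow> (\<forall>j<nc M. col_wt M j \<le> k)"
  unfolding cmax_def by auto

lemma row_le_rmax: "i < nr M \<Longrightarrow> row_wt M i \<le> rmax M"
  unfolding rmax_def by simp

lemma col_le_cmax: "j < nc M \<Longrightarrow> col_wt M j \<le> cmax M"
  unfolding cmax_def by simp

lemma rmax_attained: assumes "0 < nr M" shows "\<exists>i<nr M. row_wt M i = rmax M"
proof -
  have "rmax M \<in> insert 0 (row_wt M ` {..<nr M})" unfolding rmax_def by (rule Max_in) auto
  then show ?thesis
  proof
    assume "rmax M = 0"
    then show ?thesis using row_le_rmax[of 0 M] assms by auto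
  qed auto
qed

lemma cmax_attained: assumes "0 < nc M" shows "\<exists>j<nc M. col_wt M j = cmax M"
proof -
  have "cmax M \<in> insert 0 (col_wt M ` {..<nc M})" unfolding cmax_def by (rule Max_in) auto
  then show ?thesis
  proof
    assume "cmax M = 0"
    then show ?thesis using col_le_cmax[of 0 M] assms by auto
  qed auto
qed

lemma delta_transp: "delta (transp M) = delta M"
  unfolding delta_def rmax_def cmax_def by (simp add: row_wt_transp col_wt_transp max.commute)

lemma div_lt: "i < p * q \<Longrightarrow> i div q < p" for i p q :: nat
  by (simp add: less_mult_imp_div_less)

lemma mod_lt: "i < p * q \<Longrightarrow> i mod q < q" for i p q :: nat
  by (metis mod_less_divisor mult_0_right not_gr_zero not_less_zero)

lemma times_lt: "i < p \<Longrightarrow> b < q \<Longrightarrow> i * q + b < p * q" for i p q b :: nat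
proof -
  assume a: "i < p" "b < q"
  have "i*q + b < i*q + q" using a by simp
  also have "\<dots> = (i+1)*q" by simp
  also have "\<dots> \<le> p*q" using a(1) by (intro mult_right_mono) auto
  finally show ?thesis .
qed

lemma delta_kron_right: assumes "0 < n" shows "delta (kron M (ident n)) = delta M"
proof -
  have "rmax (kron M (ident n)) = rmax M"
  proof (rule antisym)
    show "rmax (kron M (ident n)) \<le> rmax M" unfolding rmax_le_iff
      using row_le_rmax div_lt mod_lt by (simp add: row_wt_kron row_wt_ident)
    show "rmax M \<le> rmax (kron M (ident n))" unfolding rmax_le_iff
    proof (intro allI impI)
      fix i assume i: "i < nr M"
      have "row_wt M i = row_wt (kron M (ident n)) (i*n+0)" using assms by (simp add: row_wt_kron row_wt_ident)
      also have "\<dots> \<le> rmax (kron M (ident n))" by (rule row_le_rmax) (use times_lt[OF i assms] in simp)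
      finally show "row_wt M i \<le> rmax (kron M (ident n))" .
    qed
  qed
  moreover have "cmax (kron M (ident n)) = cmax M"
  proof (rule antisym)
    show "cmax (kron M (ident n)) \<le> cmax M" unfolding cmax_le_iff
      using col_le_cmax div_lt mod_lt by (simp add: col_wt_kron col_wt_ident)
    show "cmax M \<le> cmax (kron M (ident n))" unfolding cmax_le_iff
    proof (intro allI impI)
      fix i assume i: "i < nc M"
      have "col_wt M i = col_wt (kron M (ident n)) (i*n+0)" using assms by (simp add: col_wt_kron col_wt_ident)
      also have "\<dots> \<le> cmax (kron M (ident n))" by (rule col_le_cmax) (use times_lt[OF i assms] in simp)
      finally show "col_wt M i \<le> cmax (kron M (ident n))" .
    qed
  qed
  ultimately show ?thesis unfolding delta_def by simp
qed

lemma delta_kron_left: assumes "0 < n" shows "delta (kron (ident n) M) = delta M"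
proof -
  have "rmax (kron (ident n) M) = rmax M"
  proof (rule antisym)
    show "rmax (kron (ident n) M) \<le> rmax M" unfolding rmax_le_iff
      using row_le_rmax div_lt mod_lt by (simp add: row_wt_kron row_wt_ident)
    show "rmax M \<le> rmax (kron (ident n) M)" unfolding rmax_le_iff
    proof (intro allI impI)
      fix i assume i: "i < nr M"
      have "row_wt M i = row_wt (kron (ident n) M) (0*nr M+i)" using assms i by (simp add: row_wt_kron row_wt_ident)
      also have "\<dots> \<le> rmax (kron (ident n) M)" by (rule row_le_rmax) (use times_lt[OF assms i] in simp)
      finally show "row_wt M i \<le> rmax (kron (ident n) M)" .
    qed
  qed
  moreover have "cmax (kron (ident n) M) = cmax M"
  proof (rule antisym)
    show "cmax (kron (ident n) M) \<le> cmax M" unfolding cmax_le_iff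
      using col_le_cmax div_lt mod_lt by (simp add: col_wt_kron col_wt_ident)
    show "cmax M \<le> cmax (kron (ident n) M)" unfolding cmax_le_iff
    proof (intro allI impI)
      fix i assume i: "i < nc M"
      have "col_wt M i = col_wt (kron (ident n) M) (0*nc M+i)" using assms i by (simp add: col_wt_kron col_wt_ident)
      also have "\<dots> \<le> cmax (kron (ident n) M)" by (rule col_le_cmax) (use times_lt[OF assms i] in simp)
      finally show "col_wt M i \<le> cmax (kron (ident n) M)" .
    qed
  qed
  ultimately show ?thesis unfolding delta_def by simp
qed

lemma row_wt_hcat: "row_wt (hcat M N) i = row_wt M i + row_wt N i"
proof -
  let ?A = "{j. j < nc M \<and> ent M i j}" and ?B = "{j. j < nc N \<and> ent N i j}"
  have "{j. j < nc (hcat M N) \<and> ent (hcat M N) i j} = ?A \<union> (\<lambda>j. j + nc M) ` ?B"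
  proof (intro set_eqI iffI)
    fix j assume "j \<in> {j. j < nc (hcat M N) \<and> ent (hcat M N) i j}"
    then have j: "j < nc M + nc N" "if j < nc M then ent M i j else ent N i (j - nc M)"
      by (auto simp: hcat_def)
    show "j \<in> ?A \<union> (\<lambda>j. j + nc M) ` ?B"
    proof (cases "j < nc M")
      case True then show ?thesis using j by auto
    next
      case False
      then have "j = (j - nc M) + nc M" by simp
      then show ?thesis using j False by (auto intro!: image_eqI[of j _ "j - nc M"])
    qed
  qed (auto simp: hcat_def)
  moreover have "card (?A \<union> (\<lambda>j. j + nc M) ` ?B) = card ?A + card ?B"
    by (subst card_Un_disjoint) (auto simp: card_image inj_on_def)
  ultimately show ?thesis unfolding row_wt_def by simp
qed

lemma col_wt_vcat: "col_wt (vcat M N) j = col_wt M j + col_wt N j"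
proof -
  let ?A = "{i. i < nr M \<and> ent M i j}" and ?B = "{i. i < nr N \<and> ent N i j}"
  have "{i. i < nr (vcat M N) \<and> ent (vcat M N) i j} = ?A \<union> (\<lambda>i. i + nr M) ` ?B"
  proof (intro set_eqI iffI)
    fix i assume "i \<in> {i. i < nr (vcat M N) \<and> ent (vcat M N) i j}"
    then have i: "i < nr M + nr N" "if i < nr M then ent M i j else ent N (i - nr M) j"
      by (auto simp: vcat_def)
    show "i \<in> ?A \<union> (\<lambda>i. i + nr M) ` ?B"
    proof (cases "i < nr M")
      case True then show ?thesis using i by auto
    next
      case False
      then have "i = (i - nr M) + nr M" by simp
      then show ?thesis using i False by (auto intro!: image_eqI[of i _ "i - nr M"])
    qed
  qed (auto simp: vcat_def)
  moreover have "card (?A \<union> (\<lambda>i. i + nr M) ` ?B) = card ?A + card ?B"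
    by (subst card_Un_disjoint) (auto simp: card_image inj_on_def)
  ultimately show ?thesis unfolding col_wt_def by simp
qed

lemma col_wt_hcat1: "j < nc M \<Longrightarrow> col_wt (hcat M N) j = col_wt M j"
  unfolding col_wt_def hcat_def by simp

lemma col_wt_hcat2: "nr N = nr M \<Longrightarrow> col_wt (hcat M N) (nc M + j) = col_wt N j"
  unfolding col_wt_def hcat_def by simp

lemma row_wt_vcat1: "i < nr M \<Longrightarrow> row_wt (vcat M N) i = row_wt M i"
  unfolding row_wt_def vcat_def by simp

lemma row_wt_vcat2: "nc N = nc M \<Longrightarrow> row_wt (vcat M N) (nr M + i) = row_wt N i"
  unfolding row_wt_def vcat_def by simp


lemma bmat_colouring: "\<exists>col. proper_colouring M (delta M) col"
proof -
  define E where "E = {(i,j). i<nr M \<and> j<nc M \<and> ent M i j}"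
  have fin: "finite E" unfolding E_def
    by (rule finite_subset[of _ "{..<nr M} \<times> {..<nc M}"]) auto
  have r: "card {c. (r,c)\<in>E} \<le> delta M" for r
  proof (cases "r < nr M")
    case True
    then have "{c. (r,c)\<in>E} = {j. j<nc M \<and> ent M r j}" unfolding E_def by auto
    then have "card {c. (r,c)\<in>E} = row_wt M r" unfolding row_wt_def by simp
    also have "\<dots> \<le> rmax M" using True by (rule row_le_rmax)
    finally show ?thesis unfolding delta_def by simp
  next
    case False
    then have "{c. (r,c)\<in>E} = {}" unfolding E_def by auto
    then show ?thesis by simp
  qed
  have c: "card {r. (r,c)\<in>E} \<le> delta M" for c
  proof (cases "c < nc M")
    case True
    then have "{r. (r,c)\<in>E} = {i. i<nr M \<and> ent M i c}" unfolding E_def by auto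
    then have "card {r. (r,c)\<in>E} = col_wt M c" unfolding col_wt_def by simp
    also have "\<dots> \<le> cmax M" using True by (rule col_le_cmax)
    finally show ?thesis unfolding delta_def by simp
  next
    case False
    then have "{r. (r,c)\<in>E} = {}" unfolding E_def by auto
    then show ?thesis by simp
  qed
  obtain col where P: "propc E (delta M) col" using konig[OF fin] r c by blast
  have P1: "\<And>r c. (r,c)\<in>E \<Longrightarrow> col r c \<in> {1..delta M}"
    and P2: "\<And>r c c'. (r,c)\<in>E \<Longrightarrow> (r,c')\<in>E \<Longrightarrow> c\<noteq>c' \<Longrightarrow> col r c \<noteq> col r c'"
    and P3: "\<And>r r' c. (r,c)\<in>E \<Longrightarrow> (r',c)\<in>E \<Longrightarrow> r\<noteq>r' \<Longrightarrow> col r c \<noteq> col r' c"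
    using P unfolding propc_def by blast+
  have mem: "i < nr M \<Longrightarrow> j < nc M \<Longrightarrow> ent M i j \<Longrightarrow> (i,j) \<in> E" for i j
    unfolding E_def by simp
  have "proper_colouring M (delta M) col"
    unfolding proper_colouring_def
  proof (intro conjI allI impI)
    fix i j assume "i < nr M" "j < nc M" "ent M i j"
    then show "col i j \<in> {1..delta M}" using P1 mem by blast
  next
    fix i j j' assume "i < nr M" "j < nc M" "j' < nc M" "ent M i j \<and> ent M i j' \<and> j \<noteq> j'"
    then show "col i j \<noteq> col i j'" using P2 mem by blast
  next
    fix i i' j assume "i < nr M" "i' < nr M" "j < nc M" "ent M i j \<and> ent M i' j \<and> i \<noteq> i'"
    then show "col i j \<noteq> col i' j" using P3 mem by blast
  qed
  then show ?thesis by blast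
qed

lemma hxz_delta:
  fixes A B :: bmat
  assumes pos: "0 < nr A" "0 < nc A" "0 < nr B" "0 < nc B"
  defines "H \<equiv> vcat (hcat (kron A (ident (nr B))) (kron (ident (nr A)) B))
                     (hcat (kron (ident (nc A)) (transp B)) (kron (transp A) (ident (nc B))))"
  shows "delta H = delta A + delta B"
proof -
  let ?mA = "nr A" and ?nA = "nc A" and ?mB = "nr B" and ?nB = "nc B"
  have nrH: "nr H = ?mA * ?mB + ?nA * ?nB" and ncH: "nc H = ?nA * ?mB + ?mA * ?nB"
    unfolding H_def by simp_all
  have row1: "row_wt H (a * ?mB + b) = row_wt A a + row_wt B b" if "a < ?mA" "b < ?mB" for a b
  proof -
    have lt: "a * ?mB + b < ?mA * ?mB" by (rule times_lt) (use that in auto)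
    have "row_wt H (a * ?mB + b) = row_wt (hcat (kron A (ident (nr B))) (kron (ident (nr A)) B)) (a * ?mB + b)"
      unfolding H_def by (rule row_wt_vcat1) (use lt in simp)
    also have "\<dots> = row_wt A a + row_wt B b" using that
      by (simp add: row_wt_hcat row_wt_kron row_wt_ident)
    finally show ?thesis .
  qed
  have row2: "row_wt H (?mA * ?mB + (j * ?nB + k)) = col_wt A j + col_wt B k" if "j < ?nA" "k < ?nB" for j k
  proof -
    have "row_wt H (?mA * ?mB + (j * ?nB + k)) = row_wt (hcat (kron (ident (nc A)) (transp B)) (kron (transp A) (ident (nc B)))) (j * ?nB + k)"
      using row_wt_vcat2[of "hcat (kron (ident (nc A)) (transp B)) (kron (transp A) (ident (nc B)))"
           "hcat (kron A (ident (nr B))) (kron (ident (nr A)) B)" "j * ?nB + k"]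
      unfolding H_def by (simp add: mult.commute)
    also have "\<dots> = col_wt A j + col_wt B k" using that
      by (simp add: row_wt_hcat row_wt_kron row_wt_ident row_wt_transp)
    finally show ?thesis .
  qed
  have col1: "col_wt H (j * ?mB + b) = col_wt A j + row_wt B b" if "j < ?nA" "b < ?mB" for j b
  proof -
    have lt: "j * ?mB + b < ?nA * ?mB" by (rule times_lt) (use that in auto)
    show ?thesis unfolding H_def col_wt_vcat using that lt
      by (simp add: col_wt_hcat1 col_wt_kron col_wt_ident col_wt_transp)
  qed
  have col2: "col_wt H (?nA * ?mB + (a * ?nB + k)) = row_wt A a + col_wt B k" if "a < ?mA" "k < ?nB" for a k
  proof -
    have e1: "col_wt (hcat (kron A (ident (nr B))) (kron (ident (nr A)) B)) (?nA * ?mB + (a * ?nB + k))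
      = col_wt (kron (ident (nr A)) B) (a * ?nB + k)"
      using col_wt_hcat2[of "kron (ident (nr A)) B" "kron A (ident (nr B))" "a * ?nB + k"] by (simp add: mult.commute)
    have e2: "col_wt (hcat (kron (ident (nc A)) (transp B)) (kron (transp A) (ident (nc B)))) (?nA * ?mB + (a * ?nB + k))
      = col_wt (kron (transp A) (ident (nc B))) (a * ?nB + k)"
      using col_wt_hcat2[of "kron (transp A) (ident (nc B))" "kron (ident (nc A)) (transp B)" "a * ?nB + k"] by (simp add: mult.commute)
    show ?thesis unfolding H_def col_wt_vcat e1 e2 using that
      by (simp add: col_wt_kron col_wt_ident col_wt_transp)
  qed
  have rowH: "row_wt H i \<le> delta A + delta B" if "i < nr H" for i
  proof (cases "i < ?mA * ?mB")
    case True
    have "i = (i div ?mB) * ?mB + i mod ?mB" by simp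
    then have "row_wt H i = row_wt A (i div ?mB) + row_wt B (i mod ?mB)"
      using row1 div_lt[OF True] mod_lt[OF True] by metis
    also have "\<dots> \<le> rmax A + rmax B"
      using row_le_rmax div_lt[OF True] mod_lt[OF True] by (intro add_mono) auto
    finally show ?thesis unfolding delta_def by linarith
  next
    case False
    define i' where "i' = i - ?mA * ?mB"
    have i': "i' < ?nA * ?nB" using that False nrH unfolding i'_def by linarith
    have "i = ?mA * ?mB + ((i' div ?nB) * ?nB + i' mod ?nB)" using False unfolding i'_def by simp
    then have "row_wt H i = col_wt A (i' div ?nB) + col_wt B (i' mod ?nB)"
      using row2 div_lt[OF i'] mod_lt[OF i'] by metis
    also have "\<dots> \<le> cmax A + cmax B"
      using col_le_cmax div_lt[OF i'] mod_lt[OF i'] by (intro add_mono) auto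
    finally show ?thesis unfolding delta_def by linarith
  qed
  have colH: "col_wt H j \<le> delta A + delta B" if "j < nc H" for j
  proof (cases "j < ?nA * ?mB")
    case True
    have "j = (j div ?mB) * ?mB + j mod ?mB" by simp
    then have "col_wt H j = col_wt A (j div ?mB) + row_wt B (j mod ?mB)"
      using col1 div_lt[OF True] mod_lt[OF True] by metis
    also have "\<dots> \<le> cmax A + rmax B"
      using col_le_cmax row_le_rmax div_lt[OF True] mod_lt[OF True] by (intro add_mono) auto
    finally show ?thesis unfolding delta_def by linarith
  next
    case False
    define j' where "j' = j - ?nA * ?mB"
    have j': "j' < ?mA * ?nB" using that False ncH unfolding j'_def by linarith
    have "j = ?nA * ?mB + ((j' div ?nB) * ?nB + j' mod ?nB)" using False unfolding j'_def by simp
    then have "col_wt H j = row_wt A (j' div ?nB) + col_wt B (j' mod ?nB)"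
      using col2 div_lt[OF j'] mod_lt[OF j'] by metis
    also have "\<dots> \<le> rmax A + cmax B"
      using col_le_cmax row_le_rmax div_lt[OF j'] mod_lt[OF j'] by (intro add_mono) auto
    finally show ?thesis unfolding delta_def by linarith
  qed
  have up: "delta H \<le> delta A + delta B"
    using rowH colH unfolding delta_def[of H] max.bounded_iff rmax_le_iff cmax_le_iff by blast
  obtain a0 where a0: "a0 < ?mA" "row_wt A a0 = rmax A" using rmax_attained pos by blast
  obtain j0 where j0: "j0 < ?nA" "col_wt A j0 = cmax A" using cmax_attained pos by blast
  obtain b0 where b0: "b0 < ?mB" "row_wt B b0 = rmax B" using rmax_attained pos by blast
  obtain k0 where k0: "k0 < ?nB" "col_wt B k0 = cmax B" using cmax_attained pos by blast
  have rr: "rmax A + rmax B \<le> delta H"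
  proof -
    have "rmax A + rmax B = row_wt H (a0 * ?mB + b0)" using row1 a0 b0 by simp
    also have "\<dots> \<le> rmax H" by (rule row_le_rmax) (use times_lt[OF a0(1) b0(1)] nrH in simp)
    finally show ?thesis unfolding delta_def by simp
  qed
  have cc: "cmax A + cmax B \<le> delta H"
  proof -
    have "cmax A + cmax B = row_wt H (?mA * ?mB + (j0 * ?nB + k0))" using row2 j0 k0 by simp
    also have "\<dots> \<le> rmax H" by (rule row_le_rmax) (use times_lt[OF j0(1) k0(1)] nrH in simp)
    finally show ?thesis unfolding delta_def by simp
  qed
  have cr: "cmax A + rmax B \<le> delta H"
  proof -
    have "cmax A + rmax B = col_wt H (j0 * ?mB + b0)" using col1 j0 b0 by simp
    also have "\<dots> \<le> cmax H" by (rule col_le_cmax) (use times_lt[OF j0(1) b0(1)] ncH in simp)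
    finally show ?thesis unfolding delta_def by simp
  qed
  have rc: "rmax A + cmax B \<le> delta H"
  proof -
    have "rmax A + cmax B = col_wt H (?nA * ?mB + (a0 * ?nB + k0))" using col2 a0 k0 by simp
    also have "\<dots> \<le> cmax H" by (rule col_le_cmax) (use times_lt[OF a0(1) k0(1)] ncH in simp)
    finally show ?thesis unfolding delta_def by simp
  qed
  have "delta A + delta B \<le> delta H"
    unfolding delta_def[of A] delta_def[of B] using rr cc cr rc by (simp add: max_def)
  then show ?thesis using up by simp
qed


lemma sec_lower:
  assumes S: "sec_schedule H m \<tau>" shows "m * delta H \<le> sec_steps H m \<tau>"
proof -
  let ?T = "sec_steps H m \<tau>"
  have sub: "sec_ops H m \<subseteq> (\<lambda>(r,i). Prep r i) ` ({..<m}\<times>{..<nr H}) \<union> (\<lambda>(r,i). Meas r i) ` ({..<m}\<times>{..<nr H})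
       \<union> (\<lambda>(r,i,j). CX r i j) ` ({..<m}\<times>{..<nr H}\<times>{..<nc H})"
  proof
    fix p assume "p \<in> sec_ops H m"
    then consider (a) r i where "p = Prep r i" "r < m" "i < nr H" | (b) r i where "p = Meas r i" "r < m" "i < nr H"
      | (c) r i j where "p = CX r i j" "r < m" "i < nr H" "j < nc H"
      unfolding sec_ops_def by blast
    then show "p \<in> (\<lambda>(r,i). Prep r i) ` ({..<m}\<times>{..<nr H}) \<union> (\<lambda>(r,i). Meas r i) ` ({..<m}\<times>{..<nr H})
       \<union> (\<lambda>(r,i,j). CX r i j) ` ({..<m}\<times>{..<nr H}\<times>{..<nc H})"
    proof cases
      case a then show ?thesis by (intro UnI1 image_eqI[of _ _ "(r,i)"]) auto
    next
      case b then show ?thesis by (intro UnI1 UnI2 image_eqI[of _ _ "(r,i)"]) auto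
    next
      case c then show ?thesis by (intro UnI2 image_eqI[of _ _ "(r,i,j)"]) auto
    qed
  qed
  have fin: "finite (sec_ops H m)" by (rule finite_subset[OF sub]) auto
  have le: "p \<in> sec_ops H m \<Longrightarrow> \<tau> p \<le> ?T" for p
    unfolding sec_steps_def by (rule Max_ge) (use fin in auto)
  have ge1: "p \<in> sec_ops H m \<Longrightarrow> 1 \<le> \<tau> p" for p using S unfolding sec_schedule_def by blast
  have dist: "p \<in> sec_ops H m \<Longrightarrow> p' \<in> sec_ops H m \<Longrightarrow> p \<noteq> p' \<Longrightarrow> op_qubits p \<inter> op_qubits p' \<noteq> {} \<Longrightarrow> \<tau> p \<noteq> \<tau> p'" for p p'
    using S unfolding sec_schedule_def by blast
  have count: "card X \<le> ?T" if X: "X \<subseteq> sec_ops H m" "inj_on \<tau> X" for X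
  proof -
    have "\<tau> ` X \<subseteq> {1..?T}" using X(1) le ge1 by auto
    then have "card (\<tau> ` X) \<le> card {1..?T}" by (rule card_mono[rotated]) simp
    then show ?thesis using card_image[OF X(2)] by simp
  qed
  have rowb: "m * row_wt H i \<le> ?T" if i: "i < nr H" for i
  proof -
    let ?X = "(\<lambda>(r,j). CX r i j) ` ({..<m} \<times> {j. j<nc H \<and> ent H i j})"
    have inj1: "inj_on (\<lambda>(r,j). CX r i j) ({..<m} \<times> {j. j<nc H \<and> ent H i j})"
      by (rule inj_onI) auto
    have c: "card ?X = m * row_wt H i"
      unfolding card_image[OF inj1] card_cartesian_product row_wt_def by simp
    have sub: "?X \<subseteq> sec_ops H m" using i unfolding sec_ops_def by auto
    have "inj_on \<tau> ?X"
    proof (rule inj_onI, rule ccontr)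
      fix p p' assume h: "p \<in> ?X" "p' \<in> ?X" "\<tau> p = \<tau> p'" "p \<noteq> p'"
      have "Anc i \<in> op_qubits p" "Anc i \<in> op_qubits p'" using h(1,2) by auto
      then show False using dist[of p p'] h sub by blast
    qed
    then show ?thesis using count[OF sub] c by simp
  qed
  have colb: "m * col_wt H j \<le> ?T" if j: "j < nc H" for j
  proof -
    let ?X = "(\<lambda>(r,i). CX r i j) ` ({..<m} \<times> {i. i<nr H \<and> ent H i j})"
    have inj1: "inj_on (\<lambda>(r,i). CX r i j) ({..<m} \<times> {i. i<nr H \<and> ent H i j})"
      by (rule inj_onI) auto
    have c: "card ?X = m * col_wt H j"
      unfolding card_image[OF inj1] card_cartesian_product col_wt_def by simp
    have sub: "?X \<subseteq> sec_ops H m" using j unfolding sec_ops_def by auto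
    have "inj_on \<tau> ?X"
    proof (rule inj_onI, rule ccontr)
      fix p p' assume h: "p \<in> ?X" "p' \<in> ?X" "\<tau> p = \<tau> p'" "p \<noteq> p'"
      have "Dat j \<in> op_qubits p" "Dat j \<in> op_qubits p'" using h(1,2) by auto
      then show False using dist[of p p'] h sub by blast
    qed
    then show ?thesis using count[OF sub] c by simp
  qed
  have r: "m * rmax H \<le> ?T"
  proof (cases "nr H = 0")
    case True
    then have "rmax H = 0" using rmax_le_iff[of H 0] by simp
    then show ?thesis by simp
  next
    case False
    then obtain i where "i < nr H" "row_wt H i = rmax H" using rmax_attained by blast
    then show ?thesis using rowb by metis
  qed
  have c: "m * cmax H \<le> ?T"
  proof (cases "nc H = 0")
    case True
    then have "cmax H = 0" using cmax_le_iff[of H 0] by simp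
    then show ?thesis by simp
  next
    case False
    then obtain j where "j < nc H" "col_wt H j = cmax H" using cmax_attained by blast
    then show ?thesis using colb by metis
  qed
  show ?thesis using r c unfolding delta_def by (simp add: max_def)
qed

lemma sec_depth_lower:
  assumes "sec_has_depth H sched t" shows "real (delta H) \<le> t"
proof -
  have lim: "(\<lambda>m. real (sec_steps H m (sched m)) / real m) \<longlonglongrightarrow> t"
    and sch: "\<And>m. sec_schedule H m (sched m)" using assms unfolding sec_has_depth_def by auto
  have "\<forall>n\<ge>1. real (delta H) \<le> real (sec_steps H n (sched n)) / real n"
  proof (intro allI impI)
    fix n :: nat assume n: "1 \<le> n"
    have "real n * real (delta H) \<le> real (sec_steps H n (sched n))"
      using sec_lower[OF sch[of n]] by (metis of_nat_le_iff of_nat_mult)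
    then show "real (delta H) \<le> real (sec_steps H n (sched n)) / real n"
      using n by (simp add: field_simps)
  qed
  then show ?thesis using LIMSEQ_le_const[OF lim] by blast
qed

theorem proposition1:
  fixes mA nA mB nB :: nat and A B :: bmat
  assumes dimA: "nr A = mA" "nc A = nA" and dimB: "nr B = mB" "nc B = nB"
    and pos: "0 < mA" "0 < nA" "0 < mB" "0 < nB"
  defines "LX \<equiv> kron A (ident mB)" and "RX \<equiv> kron (ident mA) B"
    and "LZ \<equiv> kron (ident nA) (transp B)" and "RZ \<equiv> kron (transp A) (ident nB)"
  defines "HX \<equiv> hcat LX RX" and "HZ \<equiv> hcat LZ RZ"
  shows "(\<exists>cLX cRX cLZ cRZ.
            minimal_colouring LX (delta LX) cLX \<and> minimal_colouring RX (delta RX) cRX \<and>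
            minimal_colouring LZ (delta LZ) cLZ \<and> minimal_colouring RZ (delta RZ) cRZ)
       \<and> (\<forall>kLX kRX kLZ kRZ cLX cRX cLZ cRZ.
            minimal_colouring LX kLX cLX \<and> minimal_colouring RX kRX cRX \<and>
            minimal_colouring LZ kLZ cLZ \<and> minimal_colouring RZ kRZ cRZ \<longrightarrow>
            lrc_depth kLX kRX kLZ kRZ = delta A + delta B + 2)
       \<and> delta (vcat HX HZ) = delta A + delta B
       \<and> (\<forall>sched t. sec_has_depth (vcat HX HZ) sched t \<longrightarrow> real (delta A + delta B) \<le> t)"
proof -
  have dLX: "delta LX = delta A" unfolding LX_def using delta_kron_right pos(3) by blast
  have dRX: "delta RX = delta B" unfolding RX_def using delta_kron_left pos(1) by blast
  have dLZ: "delta LZ = delta B" unfolding LZ_def using delta_kron_left pos(2) delta_transp by metis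
  have dRZ: "delta RZ = delta A" unfolding RZ_def using delta_kron_right pos(4) delta_transp by metis
  have p1: "\<exists>cLX cRX cLZ cRZ.
            minimal_colouring LX (delta LX) cLX \<and> minimal_colouring RX (delta RX) cRX \<and>
            minimal_colouring LZ (delta LZ) cLZ \<and> minimal_colouring RZ (delta RZ) cRZ"
  proof -
    obtain c1 where "proper_colouring LX (delta LX) c1" using bmat_colouring by blast
    moreover obtain c2 where "proper_colouring RX (delta RX) c2" using bmat_colouring by blast
    moreover obtain c3 where "proper_colouring LZ (delta LZ) c3" using bmat_colouring by blast
    moreover obtain c4 where "proper_colouring RZ (delta RZ) c4" using bmat_colouring by blast
    ultimately show ?thesis unfolding minimal_colouring_def by blast
  qed
  have p2: "\<forall>kLX kRX kLZ kRZ cLX cRX cLZ cRZ.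
            minimal_colouring LX kLX cLX \<and> minimal_colouring RX kRX cRX \<and>
            minimal_colouring LZ kLZ cLZ \<and> minimal_colouring RZ kRZ cRZ \<longrightarrow>
            lrc_depth kLX kRX kLZ kRZ = delta A + delta B + 2"
    unfolding minimal_colouring_def lrc_depth_def using dLX dRX dLZ dRZ by auto
  have p3: "delta (vcat HX HZ) = delta A + delta B"
    using hxz_delta[of A B] pos dimA dimB unfolding HX_def HZ_def LX_def RX_def LZ_def RZ_def by simp
  have p4: "\<forall>sched t. sec_has_depth (vcat HX HZ) sched t \<longrightarrow> real (delta A + delta B) \<le> t"
    using sec_depth_lower p3 by metis
  show ?thesis using p1 p2 p3 p4 by blast
qed

end
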